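(* Let $N\ge2$, $M=2^N$, and let $\mathcal{A}=\{a_0,\dots,a_{M-1}\}$ be a Gray-labelled rectangular $M$-QAM constellation (defined in the context), with $N_I=\lceil N/2\rceil$ in-phase bit positions $\mathcal{N}_I=\{0,\dots,N_I-1\}$ and quadrature bit positions $\mathcal{N}_Q=\{N_I,\dots,N-1\}$. For $y,h\in\mathbb{C}$ let $d_i=|y-ha_i|^2$ and let $f=\sum_{S}\bar d_S\prod_{n\in S}z_n$ be the associated pseudo-Boolean function. Then: (1) for every $S\subseteq\{0,\dots,N-1\}$ with $S\cap\mathcal{N}_I\neq\emptyset$ and $S\cap\mathcal{N}_Q\neq\emptyset$, one has $\bar d_S=0$ for all $y,h\in\mathbb{C}$; (2) the degree of $f$, i.e. the largest $|S|$ such that $\bar d_S$ is not identically zero as a function of $(y,h)\in\mathbb{C}^2$, equals $N_I=\lceil N/2\rceil$.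
   Context: For $i\in\{0,\dots,M-1\}$ write its $N$-bit binary representation as $b_0(i)\cdots b_{N-1}(i)$ with $b_0$ the most significant bit. Given $d_0,\dots,d_{M-1}$, define $f(z_0,\dots,z_{N-1})=\sum_{i}d_i\prod_{n=0}^{N-1}B_{i,n}(z_n)$, $z_n\in\{0,1\}$, with $B_{i,n}(z)=z$ if $b_n(i)=1$ and $1-z$ if $b_n(i)=0$; its multilinear expansion is $f=\sum_{S\subseteq\{0,\dots,N-1\}}\bar d_S\prod_{n\in S}z_n$ with $\bar d_S=\sum_{i:\,b_n(i)=0\ \forall n\notin S}d_i\prod_{n\in S}(-1)^{1-b_n(i)}$. Gray-labelled rectangular $M$-QAM: let $N_Q=\lfloor N/2\rfloor$. Let $g_I:\{0,\dots,2^{N_I}-1\}\to\{0,1\}^{N_I}$ and $g_Q:\{0,\dots,2^{N_Q}-1\}\to\{0,1\}^{N_Q}$ be bijections such that consecutive values $g_I(u),g_I(u+1)$ differ in exactly one coordinate, and likewise for $g_Q$. With $c>0$ set $x_u=c(2u+1-2^{N_I})$, $y_v=c(2v+1-2^{N_Q})$. The point $a_i$ whose in-phase bits $b_0(i)\cdots b_{N_I-1}(i)$ equal $g_I(u)$ and whose quadrature bits $b_{N_I}(i)\cdots b_{N-1}(i)$ equal $g_Q(v)$ is $a_i=x_u+j\,y_v$ ($j=\sqrt{-1}$). *)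

theory Defs
  imports Complex_Main
begin

text \<open>n-th bit (n = 0 is the most significant) of the N-bit binary representation of i.\<close>
definition bitMS :: "nat \<Rightarrow> nat \<Rightarrow> nat \<Rightarrow> nat" where
  "bitMS N i n = (i div 2 ^ (N - 1 - n)) mod 2"

definition dbar :: "nat \<Rightarrow> (nat \<Rightarrow> real) \<Rightarrow> nat set \<Rightarrow> real" where
  "dbar N d S = (\<Sum>i\<in>{i. i < 2 ^ N \<and> (\<forall>n<N. n \<notin> S \<longrightarrow> bitMS N i n = 0)}.
                    d i * (\<Prod>n\<in>S. (-1) ^ (1 - bitMS N i n)))"

definition pb_degree :: "nat \<Rightarrow> ('p \<Rightarrow> nat \<Rightarrow> real) \<Rightarrow> nat" where
  "pb_degree N D = Max {card S | S. S \<subseteq> {..<N} \<and> (\<exists>p. dbar N (D p) S \<noteq> 0)}"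

definition bitvecs :: "nat \<Rightarrow> nat list set" where
  "bitvecs K = {xs. length xs = K \<and> set xs \<subseteq> {0, 1}}"

definition gray_map :: "nat \<Rightarrow> (nat \<Rightarrow> nat list) \<Rightarrow> bool" where
  "gray_map K g \<longleftrightarrow> bij_betw g {..<2 ^ K} (bitvecs K) \<and>
     (\<forall>u. u + 1 < 2 ^ K \<longrightarrow> card {k. k < K \<and> g u ! k \<noteq> g (u + 1) ! k} = 1)"

definition gray_qam :: "nat \<Rightarrow> real \<Rightarrow> (nat \<Rightarrow> nat list) \<Rightarrow> (nat \<Rightarrow> nat list) \<Rightarrow> (nat \<Rightarrow> complex) \<Rightarrow> bool" where
  "gray_qam N c gI gQ a \<longleftrightarrow>
     (let NQ = N div 2; NI = N - NQ in
      c > 0 \<and> gray_map NI gI \<and> gray_map NQ gQ \<and>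
      (\<forall>i < 2 ^ N. \<forall>u < 2 ^ NI. \<forall>v < 2 ^ NQ.
         map (bitMS N i) [0..<NI] = gI u \<and> map (bitMS N i) [NI..<N] = gQ v \<longrightarrow>
         a i = Complex (c * (2 * real u + 1 - 2 ^ NI)) (c * (2 * real v + 1 - 2 ^ NQ))))"

end

theory Submission imports Defs begin

lemma bitMS_bit: "bitMS N i n = of_bool (bit i (N-1-n))"
  by (simp add: bitMS_def bit_iff_odd odd_iff_mod_2_eq_one)

lemma set_bit_less: "(i::nat) < 2^N \<Longrightarrow> e < N \<Longrightarrow> set_bit e i < 2^N"
proof -
  assume i: "i < 2^N" and e: "e < N"
  have ti: "take_bit N i = i" using i by (simp add: take_bit_nat_eq_self_iff)
  have "take_bit N (set_bit e i) = set_bit e (take_bit N i)" using e by (simp add: take_bit_set_bit_eq)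
  then have "take_bit N (set_bit e i) = set_bit e i" using ti by simp
  then show ?thesis by (simp add: take_bit_nat_eq_self_iff)
qed

lemma bit_ge: "(i::nat) < 2^N \<Longrightarrow> N \<le> k \<Longrightarrow> \<not> bit i k"
proof -
  assume i: "i < 2^N" and k: "N \<le> k"
  have "take_bit N i = i" using i by (simp add: take_bit_nat_eq_self_iff)
  then have "bit i k = bit (take_bit N i) k" by simp
  also have "\<dots> = False" using k by (simp add: bit_take_bit_iff)
  finally show ?thesis by simp
qed

lemma unset_bit_less: "(i::nat) < 2^N \<Longrightarrow> unset_bit e i < 2^N"
proof -
  assume i: "i < 2^N"
  show ?thesis
  proof (cases "e < N")
    case True
    have ti: "take_bit N i = i" using i by (simp add: take_bit_nat_eq_self_iff)
    have "take_bit N (unset_bit e i) = unset_bit e (take_bit N i)" using True by (simp add: take_bit_unset_bit_eq)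
    then have "take_bit N (unset_bit e i) = unset_bit e i" using ti by simp
    then show ?thesis by (simp add: take_bit_nat_eq_self_iff)
  next
    case False
    have nb: "\<not> bit i e" using bit_ge[OF i] False by simp
    have "unset_bit e i = i"
    proof (rule bit_eqI)
      fix n show "bit (unset_bit e i) n = bit i n" using nb by (auto simp: bit_unset_bit_iff)
    qed
    then show ?thesis using i by simp
  qed
qed

lemma dbar_vanish:
  assumes nS: "n \<in> S" and SN: "S \<subseteq> {..<N}"
    and inv: "\<And>i. i < 2^N \<Longrightarrow> bitMS N i n = 0 \<Longrightarrow> d (set_bit (N-1-n) i) = d i"
  shows "dbar N d S = 0"
proof -
  define e where "e = N - 1 - n"
  have nN: "n < N" using nS SN by auto
  have eN: "e < N" using nN unfolding e_def by simp
  have ne: "\<And>m. m < N \<Longrightarrow> (N - 1 - m = e) = (m = n)" using nN unfolding e_def by auto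
  define A where "A = {i. i < 2 ^ N \<and> (\<forall>m<N. m \<notin> S \<longrightarrow> bitMS N i m = 0)}"
  define f where "f = (\<lambda>i. d i * (\<Prod>m\<in>S. (-1::real) ^ (1 - bitMS N i m)))"
  have finA: "finite A" unfolding A_def by auto
  have split: "sum f A = sum f {i\<in>A. \<not> bit i e} + sum f {i\<in>A. bit i e}"
  proof -
    have "A = {i\<in>A. \<not> bit i e} \<union> {i\<in>A. bit i e}" by auto
    then have "sum f A = sum f ({i\<in>A. \<not> bit i e} \<union> {i\<in>A. bit i e})" by simp
    also have "\<dots> = sum f {i\<in>A. \<not> bit i e} + sum f {i\<in>A. bit i e}"
      by (rule sum.union_disjoint) (use finA in auto)
    finally show ?thesis .
  qed
  have re: "sum f {i\<in>A. bit i e} = sum (\<lambda>i. f (set_bit e i)) {i\<in>A. \<not> bit i e}"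
  proof (rule sum.reindex_bij_witness[where i="set_bit e" and j="unset_bit e"])
    fix i assume "i \<in> {i\<in>A. bit i e}"
    then have iA: "i < 2^N" "\<And>m. m<N \<Longrightarrow> m \<notin> S \<Longrightarrow> bitMS N i m = 0" "bit i e"
      unfolding A_def by auto
    show si: "set_bit e (unset_bit e i) = i"
      using iA(3) by (intro bit_eqI) (auto simp: bit_simps)
    show "unset_bit e i \<in> {i\<in>A. \<not> bit i e}"
      unfolding A_def using iA unset_bit_less[OF iA(1)] nS ne
      by (auto simp: bitMS_bit bit_simps)
    show "f (set_bit e (unset_bit e i)) = f i" using si by simp
  next
    fix i assume "i \<in> {i\<in>A. \<not> bit i e}"
    then have iA: "i < 2^N" "\<And>m. m<N \<Longrightarrow> m \<notin> S \<Longrightarrow> bitMS N i m = 0" "\<not> bit i e"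
      unfolding A_def by auto
    show "unset_bit e (set_bit e i) = i"
      using iA(3) by (intro bit_eqI) (auto simp: bit_simps)
    show "set_bit e i \<in> {i\<in>A. bit i e}"
      unfolding A_def using iA set_bit_less[OF iA(1) eN] nS ne
      by (auto simp: bitMS_bit bit_simps)
  qed
  have neg: "f (set_bit e i) = - f i" if "i \<in> {i\<in>A. \<not> bit i e}" for i
  proof -
    have iA: "i < 2^N" "\<not> bit i e" using that unfolding A_def by auto
    have b0: "bitMS N i n = 0" using iA(2) by (simp add: bitMS_bit e_def)
    have b1: "bitMS N (set_bit e i) n = 1" by (simp add: bitMS_bit e_def bit_simps)
    have bo: "bitMS N (set_bit e i) m = bitMS N i m" if "m \<in> S - {n}" for m
      using that SN ne by (auto simp: bitMS_bit bit_simps)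
    have "d (set_bit e i) = d i" using inv[OF iA(1) b0] by (simp add: e_def)
    moreover have "(\<Prod>m\<in>S. (-1::real) ^ (1 - bitMS N (set_bit e i) m)) =
        - (\<Prod>m\<in>S. (-1::real) ^ (1 - bitMS N i m))"
    proof -
      have fS: "finite S" using SN finite_subset by blast
      have "(\<Prod>m\<in>S. (-1::real) ^ (1 - bitMS N (set_bit e i) m)) =
           (-1::real) ^ (1 - bitMS N (set_bit e i) n) * (\<Prod>m\<in>S-{n}. (-1::real) ^ (1 - bitMS N (set_bit e i) m))"
        using prod.remove[OF fS nS] by blast
      also have "\<dots> = (\<Prod>m\<in>S-{n}. (-1::real) ^ (1 - bitMS N i m))"
        using b1 bo by simp
      also have "\<dots> = - ((-1::real) ^ (1 - bitMS N i n) * (\<Prod>m\<in>S-{n}. (-1::real) ^ (1 - bitMS N i m)))"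
        using b0 by simp
      also have "\<dots> = - (\<Prod>m\<in>S. (-1::real) ^ (1 - bitMS N i m))"
        by (subst prod.remove[OF fS nS]) simp
      finally show ?thesis .
    qed
    ultimately show ?thesis unfolding f_def by simp
  qed
  have "dbar N d S = sum f A" unfolding dbar_def A_def f_def by simp
  also have "\<dots> = 0" using split re neg by (simp add: sum_negf)
  finally show ?thesis .
qed


lemma bitMS_set_bit: "m < N \<Longrightarrow> n < N \<Longrightarrow> m \<noteq> n \<Longrightarrow> bitMS N (set_bit (N-1-n) (i::nat)) m = bitMS N i m"
  by (auto simp: bitMS_bit bit_simps)

lemma bitMS_01: "bitMS N i n \<in> {0,1}"
  by (simp add: bitMS_bit)

lemma dbar_cong: "(\<And>i. i < 2^N \<Longrightarrow> f i = g i) \<Longrightarrow> dbar N f S = dbar N g S"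
  unfolding dbar_def by (intro sum.cong) auto

lemma dbar_lin: "dbar N (\<lambda>i. \<alpha> * f i + \<beta> * g i) S = \<alpha> * dbar N f S + \<beta> * dbar N g S"
  unfolding dbar_def by (simp add: algebra_simps sum.distrib sum_distrib_left)

lemma part1:
  assumes SN: "S \<subseteq> {..<N}" and KN: "K \<le> N"
    and SI: "S \<inter> {..<K} \<noteq> {}" and SQ: "S \<inter> {K..<N} \<noteq> {}"
    and dec: "\<And>i. i < 2^N \<Longrightarrow> d i = F (map (bitMS N i) [0..<K]) + G (map (bitMS N i) [K..<N])"
  shows "dbar N d S = 0"
proof -
  have "dbar N d S = dbar N (\<lambda>i. 1 * F (map (bitMS N i) [0..<K]) + 1 * G (map (bitMS N i) [K..<N])) S"
    using dec by (intro dbar_cong) simp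
  also have "\<dots> = dbar N (\<lambda>i. F (map (bitMS N i) [0..<K])) S + dbar N (\<lambda>i. G (map (bitMS N i) [K..<N])) S"
    by (subst dbar_lin) simp
  also have "dbar N (\<lambda>i. F (map (bitMS N i) [0..<K])) S = 0"
  proof -
    obtain n where n: "n \<in> S" "K \<le> n" "n < N" using SQ by auto
    show ?thesis
    proof (rule dbar_vanish[OF n(1) SN])
      fix i :: nat assume "i < 2^N"
      have "map (bitMS N (set_bit (N - 1 - n) i)) [0..<K] = map (bitMS N i) [0..<K]"
        using n KN bitMS_set_bit[of _ N n i] by (intro map_cong) auto
      then show "F (map (bitMS N (set_bit (N - 1 - n) i)) [0..<K]) = F (map (bitMS N i) [0..<K])"
        by (rule arg_cong[where f=F])
    qed
  qed
  also have "dbar N (\<lambda>i. G (map (bitMS N i) [K..<N])) S = 0"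
  proof -
    obtain n where n: "n \<in> S" "n < K" using SI by auto
    show ?thesis
    proof (rule dbar_vanish[OF n(1) SN])
      fix i :: nat assume "i < 2^N"
      have "map (bitMS N (set_bit (N - 1 - n) i)) [K..<N] = map (bitMS N i) [K..<N]"
        using n KN bitMS_set_bit[of _ N n i] by (intro map_cong) auto
      then show "G (map (bitMS N (set_bit (N - 1 - n) i)) [K..<N]) = G (map (bitMS N i) [K..<N])"
        by (rule arg_cong[where f=G])
    qed
  qed
  finally show ?thesis by simp
qed

definition sgnw :: "nat \<Rightarrow> nat list \<Rightarrow> real" where
  "sgnw K w = (\<Prod>n<K. (-1) ^ (1 - w ! n))"

lemma gray_flip:
  assumes g: "gray_map K g" and u: "u + 1 < 2^K"
  shows "sgnw K (g (u+1)) = - sgnw K (g u)"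
proof -
  have bij: "bij_betw g {..<2^K} (bitvecs K)" using g unfolding gray_map_def by simp
  have wv: "g u \<in> bitvecs K" "g (u+1) \<in> bitvecs K"
    using bij_betw_apply[OF bij] u by auto
  have "card {k. k < K \<and> g u ! k \<noteq> g (u + 1) ! k} = 1" using g u unfolding gray_map_def by simp
  then obtain k where k: "{k. k < K \<and> g u ! k \<noteq> g (u + 1) ! k} = {k}" by (rule card_1_singletonE)
  have kK: "k < K" and dk: "g u ! k \<noteq> g (u+1) ! k" using k by auto
  have eq: "g u ! n = g (u+1) ! n" if "n \<in> {..<K} - {k}" for n using that k by auto
  have b01: "g u ! k \<in> {0,1}" "g (u+1) ! k \<in> {0,1}"
  proof -
    have "length (g u) = K" "set (g u) \<subseteq> {0,1}" "length (g (u+1)) = K" "set (g (u+1)) \<subseteq> {0,1}"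
      using wv unfolding bitvecs_def by auto
    then show "g u ! k \<in> {0,1}" "g (u+1) ! k \<in> {0,1}"
      using nth_mem[of k "g u"] nth_mem[of k "g (u+1)"] kK by (metis subsetD)+
  qed
  have "sgnw K (g (u+1)) = (-1) ^ (1 - g (u+1) ! k) * (\<Prod>n\<in>{..<K}-{k}. (-1::real) ^ (1 - g (u+1) ! n))"
    unfolding sgnw_def using kK by (subst prod.remove[of "{..<K}" k]) auto
  also have "(\<Prod>n\<in>{..<K}-{k}. (-1::real) ^ (1 - g (u+1) ! n)) = (\<Prod>n\<in>{..<K}-{k}. (-1::real) ^ (1 - g u ! n))"
    using eq by (intro prod.cong) auto
  also have "(-1::real) ^ (1 - g (u+1) ! k) = - ((-1) ^ (1 - g u ! k))"
    using b01 dk by auto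
  also have "- ((-1::real) ^ (1 - g u ! k)) * (\<Prod>n\<in>{..<K}-{k}. (-1::real) ^ (1 - g u ! n)) = - sgnw K (g u)"
    unfolding sgnw_def using kK by (subst prod.remove[of "{..<K}" k]) auto
  finally show ?thesis .
qed

lemma gray_sgn:
  assumes g: "gray_map K g" shows "u < 2^K \<Longrightarrow> sgnw K (g u) = sgnw K (g 0) * (-1) ^ u"
proof (induction u)
  case (Suc u)
  then show ?case using gray_flip[OF g, of u] by simp
qed simp

lemma alt_sum: "(\<Sum>u<2*m. (-1::real) ^ u * (2 * real u + b)) = - 2 * real m"
proof (induction m)
  case (Suc m)
  have "(\<Sum>u<2*Suc m. (-1::real) ^ u * (2 * real u + b)) =
        (\<Sum>u<2*m. (-1::real) ^ u * (2 * real u + b)) + (-1)^(2*m) * (2 * real (2*m) + b)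
         + (-1)^(2*m+1) * (2 * real (2*m+1) + b)"
  proof -
    have e: "2 * Suc m = Suc (Suc (2*m))" by simp
    show ?thesis unfolding e sum.lessThan_Suc by (simp add: algebra_simps)
  qed
  also have "\<dots> = - 2 * real (Suc m)" using Suc by (simp add: algebra_simps)
  finally show ?case .
qed simp

lemma sgnw_nz: "sgnw K w \<noteq> 0"
  unfolding sgnw_def by simp

lemma cmod_decomp:
  "(cmod (y - h * Complex X Y))\<^sup>2 =
     (Re y ^ 2 + Im y ^ 2 + (Re h ^ 2 + Im h ^ 2) * X ^ 2 - 2 * Re y * Re h * X - 2 * Im y * Im h * X)
   + ((Re h ^ 2 + Im h ^ 2) * Y ^ 2 + 2 * Re y * Im h * Y - 2 * Im y * Re h * Y)"
  unfolding cmod_power2 by (simp add: power2_eq_square algebra_simps)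

lemma cmod_diff: "(cmod (1 - 1 * z))\<^sup>2 - (cmod (-1 - 1 * z))\<^sup>2 = - 4 * Re z"
  unfolding cmod_power2 by (simp add: power2_eq_square algebra_simps)

lemma NI_eq: "nat \<lceil>real N / 2\<rceil> = N - N div 2"
proof (cases "even N")
  case True
  then obtain q where q: "N = 2 * q" by (rule evenE)
  have "real N / 2 = real q" unfolding q by simp
  then have "\<lceil>real N / 2\<rceil> = int q" by simp
  moreover have "N - N div 2 = q" unfolding q by simp
  ultimately show ?thesis by simp
next
  case False
  then obtain q where q: "N = 2 * q + 1" by (rule oddE)
  have "real N / 2 = real q + 1/2" unfolding q by simp
  then have "\<lceil>real N / 2\<rceil> = int q + 1" by (intro ceiling_unique) simp_all
  moreover have "N - N div 2 = q + 1" unfolding q by simp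
  ultimately show ?thesis by simp
qed

lemma map_bits_in: "map (bitMS N i) [p..<q] \<in> bitvecs (q - p)"
proof -
  have "set (map (bitMS N i) [p..<q]) \<subseteq> {0,1}"
  proof
    fix x assume "x \<in> set (map (bitMS N i) [p..<q])"
    then obtain n where "x = bitMS N i n" by auto
    then show "x \<in> {0,1}" using bitMS_01[of N i n] by simp
  qed
  then show ?thesis unfolding bitvecs_def by simp
qed

lemma qam_decomp:
  assumes q: "gray_qam N c gI gQ a" and i: "i < 2^N"
  shows "a i = Complex (c * (2 * real (inv_into {..<2^(N - N div 2)} gI (map (bitMS N i) [0..<N - N div 2])) + 1 - 2^(N - N div 2)))
                       (c * (2 * real (inv_into {..<2^(N div 2)} gQ (map (bitMS N i) [N - N div 2..<N])) + 1 - 2^(N div 2)))"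
proof -
  define K where "K = N - N div 2"
  define L where "L = N div 2"
  have q': "gray_map K gI" "gray_map L gQ"
    and A: "\<forall>i < 2 ^ N. \<forall>u < 2 ^ K. \<forall>v < 2 ^ L.
         map (bitMS N i) [0..<K] = gI u \<and> map (bitMS N i) [K..<N] = gQ v \<longrightarrow>
         a i = Complex (c * (2 * real u + 1 - 2 ^ K)) (c * (2 * real v + 1 - 2 ^ L))"
    using q unfolding gray_qam_def Let_def K_def L_def by auto
  have bI: "bij_betw gI {..<2^K} (bitvecs K)" and bQ: "bij_betw gQ {..<2^L} (bitvecs L)"
    using q' unfolding gray_map_def by auto
  have wI: "map (bitMS N i) [0..<K] \<in> bitvecs K" using map_bits_in[of N i 0 K] by simp
  have wQ: "map (bitMS N i) [K..<N] \<in> bitvecs L" using map_bits_in[of N i K N] by (simp add: K_def L_def)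
  define u where "u = inv_into {..<2^K} gI (map (bitMS N i) [0..<K])"
  define v where "v = inv_into {..<2^L} gQ (map (bitMS N i) [K..<N])"
  have "map (bitMS N i) [0..<K] \<in> gI ` {..<2^K}" using wI bI by (simp add: bij_betw_def)
  then have u1: "u \<in> {..<2^K}" unfolding u_def by (rule inv_into_into)
  have u2: "gI u = map (bitMS N i) [0..<K]" unfolding u_def by (rule bij_betw_inv_into_right[OF bI wI])
  have "map (bitMS N i) [K..<N] \<in> gQ ` {..<2^L}" using wQ bQ by (simp add: bij_betw_def)
  then have v1: "v \<in> {..<2^L}" unfolding v_def by (rule inv_into_into)
  have v2: "gQ v = map (bitMS N i) [K..<N]" unfolding v_def by (rule bij_betw_inv_into_right[OF bQ wQ])
  have u: "u < 2^K" "gI u = map (bitMS N i) [0..<K]" using u1 u2 by auto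
  have v: "v < 2^L" "gQ v = map (bitMS N i) [K..<N]" using v1 v2 by auto
  show ?thesis using A i u v unfolding u_def v_def K_def L_def by auto
qed

lemma lower:
  assumes g: "gray_map K gI" and K1: "1 \<le> K" and KN: "K \<le> N" and c: "c > 0"
    and x: "\<And>i. i < 2^N \<Longrightarrow> X i = c * (2 * real (inv_into {..<2^K} gI (map (bitMS N i) [0..<K])) + 1 - 2^K)"
  shows "dbar N X {..<K} \<noteq> 0"
proof -
  define B where "B i = map (bitMS N i) [0..<K]" for i
  define Idx where "Idx = {i. i < 2 ^ N \<and> (\<forall>n<N. n \<notin> {..<K} \<longrightarrow> bitMS N i n = 0)}"
  define XX where "XX w = c * (2 * real (inv_into {..<2^K} gI w) + 1 - 2^K)" for w
  have bijg: "bij_betw gI {..<2^K} (bitvecs K)" using g unfolding gray_map_def by simp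
  have finIdx: "finite Idx" unfolding Idx_def by auto
  have step1: "dbar N X {..<K} = (\<Sum>i\<in>Idx. XX (B i) * sgnw K (B i))"
    unfolding dbar_def Idx_def[symmetric]
  proof (rule sum.cong)
    fix i assume "i \<in> Idx"
    then have i: "i < 2^N" unfolding Idx_def by auto
    have "(\<Prod>n\<in>{..<K}. (-1::real) ^ (1 - bitMS N i n)) = sgnw K (B i)"
      unfolding sgnw_def B_def by (intro prod.cong) auto
    then show "X i * (\<Prod>n\<in>{..<K}. (-1::real) ^ (1 - bitMS N i n)) = XX (B i) * sgnw K (B i)"
      using x[OF i] unfolding XX_def B_def by simp
  qed simp
  have inj: "inj_on B Idx"
  proof
    fix i j assume iI: "i \<in> Idx" and jI: "j \<in> Idx" and eq: "B i = B j"
    have i: "i < 2^N" "\<And>n. n<N \<Longrightarrow> K \<le> n \<Longrightarrow> bitMS N i n = 0" using iI unfolding Idx_def by auto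
    have j: "j < 2^N" "\<And>n. n<N \<Longrightarrow> K \<le> n \<Longrightarrow> bitMS N j n = 0" using jI unfolding Idx_def by auto
    show "i = j"
    proof (rule bit_eqI)
      fix k
      show "bit i k = bit j k"
      proof (cases "k < N")
        case True
        define n where "n = N - 1 - k"
        have nN: "n < N" and kn: "N - 1 - n = k" using True unfolding n_def by auto
        have "bitMS N i n = bitMS N j n"
        proof (cases "n < K")
          case True
          have "B i ! n = B j ! n" using eq by simp
          then show ?thesis using True unfolding B_def by simp
        next
          case False
          then show ?thesis using i(2) j(2) nN by simp
        qed
        then show ?thesis using kn by (cases "bit i k"; cases "bit j k") (auto simp: bitMS_bit)
      next
        case False
        then show ?thesis using bit_ge[OF i(1)] bit_ge[OF j(1)] by simp
      qed
    qed
  qed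
  have img: "B ` Idx \<subseteq> bitvecs K"
    unfolding B_def using map_bits_in[of N _ 0 K] by auto
  have cardbv: "card (bitvecs K) = 2^K" using bij_betw_same_card[OF bijg] by simp
  have finbv: "finite (bitvecs K)" using cardbv card_ge_0_finite by (metis pos2 zero_less_power)
  define L where "L = N - K"
  have sub: "(\<lambda>p::nat. p * 2^L) ` {..<2^K} \<subseteq> Idx"
  proof
    fix i :: nat assume "i \<in> (\<lambda>p. p * 2^L) ` {..<2^K}"
    then obtain p where p: "p < 2^K" "i = p * 2^L" by auto
    have "i < 2^K * 2^L" unfolding p(2) by (rule mult_strict_right_mono) (use p in auto)
    also have "\<dots> = 2^N" using KN unfolding L_def by (simp flip: power_add)
    finally have iN: "i < 2^N" .
    have "bitMS N i n = 0" if "n < N" "K \<le> n" for n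
    proof -
      have "\<not> (L \<le> N - 1 - n)" using that unfolding L_def by arith
      then have "\<not> bit (push_bit L p) (N - 1 - n)" by (simp add: bit_push_bit_iff)
      then show ?thesis unfolding p(2) bitMS_bit push_bit_eq_mult by simp
    qed
    then show "i \<in> Idx" unfolding Idx_def using iN by auto
  qed
  have injp: "inj_on (\<lambda>p::nat. p * 2^L) {..<2^K}" by (rule inj_onI) simp
  have "2^K \<le> card Idx"
    using card_inj_on_le[OF injp sub finIdx] by simp
  then have "card (bitvecs K) \<le> card (B ` Idx)" using cardbv card_image[OF inj] by simp
  then have "B ` Idx = bitvecs K" using card_seteq[OF finbv img] by simp
  then have bijB: "bij_betw B Idx (bitvecs K)" using inj unfolding bij_betw_def by simp
  have step2: "(\<Sum>i\<in>Idx. XX (B i) * sgnw K (B i)) = (\<Sum>w\<in>bitvecs K. XX w * sgnw K w)"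
    by (rule sum.reindex_bij_betw[OF bijB])
  have step3: "(\<Sum>w\<in>bitvecs K. XX w * sgnw K w) = (\<Sum>u<2^K. XX (gI u) * sgnw K (gI u))"
    by (rule sum.reindex_bij_betw[OF bijg, symmetric])
  define \<sigma> where "\<sigma> = sgnw K (gI 0)"
  have step4: "(\<Sum>u<2^K. XX (gI u) * sgnw K (gI u)) = (\<Sum>u<2^K. \<sigma> * c * ((-1) ^ u * (2 * real u + (1 - 2^K))))"
  proof (rule sum.cong)
    fix u :: nat assume u: "u \<in> {..<2^K}"
    have "inv_into {..<2^K} gI (gI u) = u"
      using u bij_betw_imp_inj_on[OF bijg] by (simp add: inv_into_f_f)
    then show "XX (gI u) * sgnw K (gI u) = \<sigma> * c * ((-1) ^ u * (2 * real u + (1 - 2^K)))"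
      using gray_sgn[OF g, of u] u unfolding XX_def \<sigma>_def by (simp add: algebra_simps)
  qed simp
  have K2: "(2::nat)^K = 2 * 2^(K-1)" using K1 by (cases K) auto
  have step5: "(\<Sum>u<2^K. \<sigma> * c * ((-1) ^ u * (2 * real u + (1 - 2^K)))) = \<sigma> * c * (- 2 * real (2^(K-1)))"
  proof -
    have "(\<Sum>u<2^K. \<sigma> * c * ((-1) ^ u * (2 * real u + (1 - 2^K)))) = \<sigma> * c * (\<Sum>u<2^K. (-1) ^ u * (2 * real u + (1 - 2^K)))"
      by (rule sum_distrib_left[symmetric])
    also have "(\<Sum>u<2^K. (-1::real) ^ u * (2 * real u + (1 - 2^K))) = - 2 * real (2^(K-1))"
      unfolding K2 by (rule alt_sum)
    finally show ?thesis .
  qed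
  have "dbar N X {..<K} = \<sigma> * c * (- 2 * real (2^(K-1)))"
    using step1 step2 step3 step4 step5 by simp
  moreover have "\<sigma> \<noteq> 0" unfolding \<sigma>_def by (rule sgnw_nz)
  ultimately show ?thesis using c by simp
qed


theorem theorem2:
  fixes N :: nat and c :: real and gI gQ :: "nat \<Rightarrow> nat list" and a :: "nat \<Rightarrow> complex"
  assumes "N \<ge> 2"
    and "gray_qam N c gI gQ a"
  defines "NI \<equiv> nat \<lceil>real N / 2\<rceil>"
  shows "(\<forall>S. S \<subseteq> {..<N} \<and> S \<inter> {..<NI} \<noteq> {} \<and> S \<inter> {NI..<N} \<noteq> {} \<longrightarrow>
            (\<forall>y h. dbar N (\<lambda>i. (cmod (y - h * a i))\<^sup>2) S = 0))
       \<and> pb_degree N (\<lambda>(y, h) i. (cmod (y - h * a i))\<^sup>2) = NI"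
proof -
  note N2 = assms(1) and q = assms(2)
  define K where "K = N - N div 2"
  define L where "L = N div 2"
  have NIK: "NI = K" unfolding NI_def K_def by (rule NI_eq)
  have KN: "K \<le> N" and K1: "1 \<le> K" and LK: "N - K \<le> K" using N2 unfolding K_def by auto
  have c: "c > 0" and gI: "gray_map K gI" using q unfolding gray_qam_def Let_def K_def by auto
  define XF where "XF w = c * (2 * real (inv_into {..<2^K} gI w) + 1 - 2^K)" for w
  define YF where "YF w = c * (2 * real (inv_into {..<2^L} gQ w) + 1 - 2^L)" for w
  have dec: "a i = Complex (XF (map (bitMS N i) [0..<K])) (YF (map (bitMS N i) [K..<N]))" if "i < 2^N" for i
    using qam_decomp[OF q that] unfolding XF_def YF_def K_def L_def by simp
  have P1: "dbar N (\<lambda>i. (cmod (y - h * a i))\<^sup>2) S = 0"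
    if S: "S \<subseteq> {..<N}" "S \<inter> {..<K} \<noteq> {}" "S \<inter> {K..<N} \<noteq> {}" for S y h
  proof (rule part1[OF S(1) KN S(2) S(3)])
    fix i :: nat assume i: "i < 2^N"
    show "(cmod (y - h * a i))\<^sup>2 =
      (\<lambda>w. Re y ^ 2 + Im y ^ 2 + (Re h ^ 2 + Im h ^ 2) * XF w ^ 2 - 2 * Re y * Re h * XF w - 2 * Im y * Im h * XF w)
        (map (bitMS N i) [0..<K]) +
      (\<lambda>w. (Re h ^ 2 + Im h ^ 2) * YF w ^ 2 + 2 * Re y * Im h * YF w - 2 * Im y * Re h * YF w)
        (map (bitMS N i) [K..<N])"
      unfolding dec[OF i] cmod_decomp by simp
  qed
  define D where "D = (\<lambda>(y, h) i. (cmod (y - h * a i))\<^sup>2)"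
  define Sset where "Sset = {card S | S. S \<subseteq> {..<N} \<and> (\<exists>p. dbar N (D p) S \<noteq> 0)}"
  have fin: "finite Sset"
  proof (rule finite_subset[of _ "{..N}"])
    show "Sset \<subseteq> {..N}"
    proof
      fix s assume "s \<in> Sset"
      then obtain S where S: "s = card S" "S \<subseteq> {..<N}" unfolding Sset_def by blast
      then have "card S \<le> card {..<N}" by (intro card_mono) auto
      then show "s \<in> {..N}" using S(1) by simp
    qed
  qed simp
  have up: "s \<le> K" if sS: "s \<in> Sset" for s
  proof -
    obtain S p where S: "s = card S" "S \<subseteq> {..<N}" "dbar N (D p) S \<noteq> 0"
      using sS unfolding Sset_def by blast
    obtain y h where p: "p = (y, h)" by (cases p)
    have "\<not> (S \<inter> {..<K} \<noteq> {} \<and> S \<inter> {K..<N} \<noteq> {})"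
      using P1[of S y h] S unfolding p D_def by auto
    then have "S \<inter> {..<K} = {} \<or> S \<inter> {K..<N} = {}" by blast
    then have "S \<subseteq> {K..<N} \<or> S \<subseteq> {..<K}"
    proof
      assume e: "S \<inter> {..<K} = {}"
      have "S \<subseteq> {K..<N}"
      proof
        fix x assume "x \<in> S"
        then have "x < N" "\<not> x < K" using S(2) e by auto
        then show "x \<in> {K..<N}" by simp
      qed
      then show ?thesis ..
    next
      assume e: "S \<inter> {K..<N} = {}"
      have "S \<subseteq> {..<K}"
      proof
        fix x assume "x \<in> S"
        then have "x < N" "x \<notin> {K..<N}" using S(2) e by auto
        then show "x \<in> {..<K}" by simp
      qed
      then show ?thesis ..
    qed
    then show ?thesis
    proof
      assume "S \<subseteq> {K..<N}"
      then have "card S \<le> N - K" using card_mono[of "{K..<N}" S] by simp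
      then show ?thesis using S(1) LK by simp
    next
      assume "S \<subseteq> {..<K}"
      then show ?thesis using S(1) card_mono[of "{..<K}" S] by simp
    qed
  qed
  have mem: "K \<in> Sset"
  proof -
    have "\<exists>p. dbar N (D p) {..<K} \<noteq> 0"
    proof (rule ccontr)
      assume "\<not> ?thesis"
      then have z: "dbar N (D (1,1)) {..<K} = 0" "dbar N (D (-1,1)) {..<K} = 0" by auto
      have "dbar N (\<lambda>i. Re (a i)) {..<K} = dbar N (\<lambda>i. (-1/4) * D (1,1) i + (1/4) * D (-1,1) i) {..<K}"
      proof (rule dbar_cong)
        fix i :: nat
        show "Re (a i) = (-1/4) * D (1,1) i + (1/4) * D (-1,1) i"
          using cmod_diff[of "a i"] unfolding D_def by simp
      qed
      also have "\<dots> = 0" unfolding dbar_lin using z by simp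
      finally have "dbar N (\<lambda>i. Re (a i)) {..<K} = 0" .
      moreover have "dbar N (\<lambda>i. Re (a i)) {..<K} \<noteq> 0"
        by (rule lower[OF gI K1 KN c]) (simp add: dec XF_def)
      ultimately show False by simp
    qed
    then obtain p where p: "dbar N (D p) {..<K} \<noteq> 0" by blast
    have "K = card {..<K} \<and> {..<K} \<subseteq> {..<N} \<and> (\<exists>p. dbar N (D p) {..<K} \<noteq> 0)"
      using p KN by (intro conjI exI[of _ p]) auto
    then show ?thesis unfolding Sset_def by blast
  qed
  have "pb_degree N D = K"
    unfolding pb_degree_def Sset_def[symmetric] by (rule Max_eqI[OF fin up mem])
  then have deg: "pb_degree N (\<lambda>(y, h) i. (cmod (y - h * a i))\<^sup>2) = K" unfolding D_def .
  show ?thesis unfolding NIK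
  proof (intro conjI allI impI)
    fix S y h assume "S \<subseteq> {..<N} \<and> S \<inter> {..<K} \<noteq> {} \<and> S \<inter> {K..<N} \<noteq> {}"
    then show "dbar N (\<lambda>i. (cmod (y - h * a i))\<^sup>2) S = 0" using P1 by blast
  qed (rule deg)
qed

end
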